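(* Let $p \equiv 1 \pmod 4$ be a prime, let $\ell \neq p$ be a prime, and let $\alpha, \beta \colon \mathbf{F}_p^{\boxtimes} \to \mathbf{Z}/\ell$ be voltage assignments. Suppose the adjacency spectra of the covers $X^\alpha$ and $X^\beta$ coincide, i.e. $\{\theta^\alpha_{a,k}\}_{a \in \mathbf{F}_p,\, k \in \mathbf{Z}/\ell} = \{\theta^\beta_{a,k}\}_{a \in \mathbf{F}_p,\, k \in \mathbf{Z}/\ell}$ as multisets. Then there exists $n \in (\mathbf{Z}/\ell)^\times$ such that $X^\alpha$ and $X^{n\beta}$ are isomorphic as $\mathbf{Z}/\ell$-covering graphs. In particular, $X^\alpha$ and $X^\beta$ are isomorphic as graphs.
   Context: For a finite field $\mathbf{F}_q$ of characteristic $p$ with $q = p^r \equiv 1 \pmod 4$, let $\mathbf{F}_q^{\boxtimes} = \{x^2 : x \in \mathbf{F}_q^\times\}$ be the set of nonzero squares (it contains $-1$). The Paley graph $X(\mathbf{F}_q)$ has vertex set $\mathbf{F}_q$ with $x$ adjacent to $y$ iff $y - x \in \mathbf{F}_q^{\boxtimes}$. Fix a prime $\ell \neq p$. A voltage assignment is a function $\alpha \colon \mathbf{F}_q^{\boxtimes} \to \mathbf{Z}/\ell$ that is not identically zero and satisfies $\alpha(-s) = -\alpha(s)$ for all $s \in \mathbf{F}_q^{\boxtimes}$. The translation invariant $\mathbf{Z}/\ell$-cover $X^\alpha$ is the graph with vertex set $\mathbf{F}_q \times \mathbf{Z}/\ell$ and an edge between $(x,i)$ and $(y,j)$ iff $y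 - x \in \mathbf{F}_q^{\boxtimes}$ and $j - i = \alpha(y-x)$; equivalently it is the Cayley graph of $\mathbf{F}_q^+ \times \mathbf{Z}/\ell$ with respect to $S^\alpha = \{(s, \alpha(s)) : s \in \mathbf{F}_q^{\boxtimes}\}$. It comes with the projection $(x,i) \mapsto x$ to $X(\mathbf{F}_q)$ and the action of $\mathbf{Z}/\ell$ by $j \cdot (x,i) = (x, i+j)$. For $n \in (\mathbf{Z}/\ell)^\times$, $n\alpha$ denotes the voltage assignment $s \mapsto n\alpha(s)$. An isomorphism of $\mathbf{Z}/\ell$-covering graphs $X^\alpha \to X^\beta$ is a graph isomorphism $f$ with $f(x, i+j) = f(x,i) + (0,j)$ for all $x, i, j$ (so it induces a map on the base $X(\mathbf{F}_q)$ compatible with the projections). Let $\zeta_p = e^{2\pi i/p}$, $\zeta_\ell = e^{2\pi i/\ell}$, and $\mathrm{tr} \colon \mathbf{F}_q \to \mathbf{F}_p$, $\mathrm{tr}(x) = x + x^p + \dots + x^{p^{r-1}}$. For $a \in \mathbf{F}_q$ and $k \in \mathbf{Z}/\ell$ set $\theta^\alpha_{a,k} = \sum_{s \in \mathbf{F}_q^{\boxtimes}} \zeta_p^{\mathrm{tr}(as)} \zeta_\ell^{k\alpha(s)}$; the multiset $\{\theta^\alpha_{a,k}\}_{a \in \mathbf{F}_q, k \in \mathbf{Z}/\ell}$ is the multiset of eigenvalues of the adjacency matrix of $X^\alpha$. *)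

theory Defs
  imports "HOL-Analysis.Analysis" "HOL-Library.Multiset"
begin

text \<open>F_p is modelled as the residues {0..<p} (integers, arithmetic mod p),
  Z/l as the residues {0..<l}. Since q = p is prime, the trace F_p \<rightarrow> F_p is the identity.\<close>

definition sq_set :: "int \<Rightarrow> int set" where
  "sq_set p = {(x * x) mod p | x. x \<in> {1..<p}}"

text \<open>A voltage assignment: a function on the nonzero squares with values in Z/l
  (only its residues mod l matter), odd, and not identically zero.\<close>
definition is_voltage :: "int \<Rightarrow> int \<Rightarrow> (int \<Rightarrow> int) \<Rightarrow> bool" where
  "is_voltage p l \<alpha> \<longleftrightarrow>
     (\<exists>s\<in>sq_set p. \<alpha> s mod l \<noteq> 0) \<and>
     (\<forall>s\<in>sq_set p. \<alpha> ((- s) mod p) mod l = (- \<alpha> s) mod l)"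

definition cover_verts :: "int \<Rightarrow> int \<Rightarrow> (int \<times> int) set" where
  "cover_verts p l = {0..<p} \<times> {0..<l}"

definition cover_adj :: "int \<Rightarrow> int \<Rightarrow> (int \<Rightarrow> int) \<Rightarrow> int \<times> int \<Rightarrow> int \<times> int \<Rightarrow> bool" where
  "cover_adj p l \<alpha> v w \<longleftrightarrow>
     (snd w - snd v) mod l = (\<alpha> ((fst w - fst v) mod p)) mod l \<and> (fst w - fst v) mod p \<in> sq_set p"

definition scale_voltage :: "int \<Rightarrow> int \<Rightarrow> (int \<Rightarrow> int) \<Rightarrow> int \<Rightarrow> int" where
  "scale_voltage l n \<alpha> = (\<lambda>s. (n * \<alpha> s) mod l)"

definition theta :: "int \<Rightarrow> int \<Rightarrow> (int \<Rightarrow> int) \<Rightarrow> int \<Rightarrow> int \<Rightarrow> complex" where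
  "theta p l \<alpha> a k = (\<Sum>s\<in>sq_set p. cis (2 * pi * of_int ((a * s) mod p) / of_int p)
                                      * cis (2 * pi * of_int ((k * \<alpha> s) mod l) / of_int l))"

definition spectrum_mset :: "int \<Rightarrow> int \<Rightarrow> (int \<Rightarrow> int) \<Rightarrow> complex multiset" where
  "spectrum_mset p l \<alpha> = image_mset (\<lambda>(a, k). theta p l \<alpha> a k) (mset_set ({0..<p} \<times> {0..<l}))"

definition graph_iso :: "int \<Rightarrow> int \<Rightarrow> (int \<Rightarrow> int) \<Rightarrow> (int \<Rightarrow> int) \<Rightarrow> (int \<times> int \<Rightarrow> int \<times> int) \<Rightarrow> bool" where
  "graph_iso p l \<alpha> \<beta> f \<longleftrightarrow>
     bij_betw f (cover_verts p l) (cover_verts p l) \<and>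
     (\<forall>v\<in>cover_verts p l. \<forall>w\<in>cover_verts p l. cover_adj p l \<alpha> v w \<longleftrightarrow> cover_adj p l \<beta> (f v) (f w))"

definition cover_iso :: "int \<Rightarrow> int \<Rightarrow> (int \<Rightarrow> int) \<Rightarrow> (int \<Rightarrow> int) \<Rightarrow> (int \<times> int \<Rightarrow> int \<times> int) \<Rightarrow> bool" where
  "cover_iso p l \<alpha> \<beta> f \<longleftrightarrow> graph_iso p l \<alpha> \<beta> f \<and>
     (\<forall>x\<in>{0..<p}. \<forall>i\<in>{0..<l}. \<forall>j\<in>{0..<l}.
        f (x, (i + j) mod l) = (fst (f (x, i)), (snd (f (x, i)) + j) mod l))"

end

theory Submission
  imports Defs "HOL-Computational_Algebra.Polynomial_Factorial" "HOL-Computational_Algebra.Primes"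
begin


definition ev :: "int poly \<Rightarrow> complex \<Rightarrow> complex" where
  "ev P z = poly (map_poly of_int P) z"

lemma mp_add: "map_poly (of_int::int\<Rightarrow>'a::comm_ring_1) (p + q) = map_poly of_int p + map_poly of_int q"
  by (rule poly_eqI) (simp add: coeff_map_poly)
lemma mp_diff: "map_poly (of_int::int\<Rightarrow>'a::comm_ring_1) (p - q) = map_poly of_int p - map_poly of_int q"
  by (rule poly_eqI) (simp add: coeff_map_poly)
lemma mp_smult: "map_poly (of_int::int\<Rightarrow>'a::comm_ring_1) (smult c q) = smult (of_int c) (map_poly of_int q)"
  by (rule poly_eqI) (simp add: coeff_map_poly)
lemma mp_mult: "map_poly (of_int::int\<Rightarrow>'a::comm_ring_1) (p * q) = map_poly of_int p * map_poly of_int q"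
proof (induction p rule: pCons_induct)
  case 0 then show ?case by simp
next
  case (pCons a p)
  have "map_poly (of_int::int\<Rightarrow>'a) (pCons a p * q) = map_poly of_int (smult a q + pCons 0 (p * q))"
    by simp
  also have "\<dots> = smult (of_int a) (map_poly of_int q) + pCons 0 (map_poly of_int p * map_poly of_int q)"
    by (simp add: mp_add mp_smult map_poly_pCons pCons.IH)
  also have "\<dots> = map_poly of_int (pCons a p) * map_poly of_int q"
    by (simp add: map_poly_pCons)
  finally show ?case .
qed

lemma ev_add[simp]: "ev (p + q) z = ev p z + ev q z" by (simp add: ev_def mp_add)
lemma ev_diff[simp]: "ev (p - q) z = ev p z - ev q z" by (simp add: ev_def mp_diff)
lemma ev_mult[simp]: "ev (p * q) z = ev p z * ev q z" by (simp add: ev_def mp_mult)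
lemma ev_smult[simp]: "ev (smult c q) z = of_int c * ev q z" by (simp add: ev_def mp_smult)
lemma ev_monom[simp]: "ev (monom c k) z = of_int c * z ^ k" by (simp add: ev_def map_poly_monom poly_monom)
lemma ev_zero[simp]: "ev 0 z = 0" by (simp add: ev_def)
lemma ev_pCons[simp]: "ev (pCons a p) z = of_int a + z * ev p z" by (simp add: ev_def map_poly_pCons)
lemma ev_const[simp]: "ev [:c:] z = of_int c" by simp
lemma ev_one[simp]: "ev 1 z = 1" by (simp add: ev_def)
lemma ev_power[simp]: "ev (p ^ k) z = ev p z ^ k" by (induction k) simp_all
lemma ev_sum: "ev (sum f A) z = (\<Sum>x\<in>A. ev (f x) z)"
  by (induction A rule: infinite_finite_induct) simp_all
lemma ev_pcompose: "ev (pcompose g (monom 1 q)) z = ev g (z ^ q)"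
  by (induction g rule: pCons_induct) (simp_all add: pcompose_pCons)

lemma minpoly:
  assumes M: "lead_coeff M = 1" "ev M w = 0"
  shows "\<exists>f. lead_coeff f = 1 \<and> ev f w = 0 \<and> (\<forall>P. ev P w = 0 \<longrightarrow> f dvd P)"
proof -
  have M0: "M \<noteq> 0" using M by auto
  define d where "d = (LEAST d. \<exists>P. P \<noteq> 0 \<and> ev P w = 0 \<and> degree P = d)"
  have "\<exists>P. P \<noteq> 0 \<and> ev P w = 0 \<and> degree P = d"
    unfolding d_def by (rule LeastI[of _ "degree M"]) (use M0 M in auto)
  then obtain r0 where r0: "r0 \<noteq> 0" "ev r0 w = 0" "degree r0 = d" by blast
  have mind: "\<And>P. P \<noteq> 0 \<Longrightarrow> ev P w = 0 \<Longrightarrow> d \<le> degree P"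
    unfolding d_def by (rule Least_le) auto
  have key: "\<exists>c. c \<noteq> 0 \<and> r0 dvd smult c P" if "ev P w = 0" for P
  proof -
    obtain qq rr where qr: "pseudo_divmod P r0 = (qq, rr)" by (cases "pseudo_divmod P r0")
    note pd = pseudo_divmod[OF r0(1) qr]
    have "ev rr w = 0"
    proof -
      have "ev (smult (coeff r0 (degree r0) ^ (Suc (degree P) - degree r0)) P) w = ev (r0 * qq + rr) w"
        using pd(1) by simp
      then show ?thesis using that r0(2) by simp
    qed
    then have "rr = 0" using pd(2) mind r0(3) by fastforce
    then show ?thesis using pd(1) r0(1) by (intro exI[of _ "coeff r0 (degree r0) ^ (Suc (degree P) - degree r0)"]) auto
  qed
  define f0 where "f0 = primitive_part r0"
  have r0eq: "r0 = smult (content r0) f0" unfolding f0_def by (simp add: content_times_primitive_part)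
  have c0: "content r0 \<noteq> 0" using r0(1) by simp
  have f0w: "ev f0 w = 0" using r0(2) c0 by (subst (asm) r0eq) simp
  have cf0: "content f0 = 1" unfolding f0_def using r0(1) by simp
  have f0dvd: "f0 dvd P" if Pw: "ev P w = 0" for P
  proof -
    obtain c where c: "c \<noteq> 0" "r0 dvd smult c P" using key[OF Pw] by blast
    have "f0 dvd r0" by (subst r0eq) (rule dvd_smult, simp)
    then have "f0 dvd smult c P" using c(2) dvd_trans by blast
    then have "fract_poly f0 dvd fract_poly (smult c P)" by (rule fract_poly_dvd)
    then have "fract_poly f0 dvd smult (to_fract c) (fract_poly P)" by simp
    then have "fract_poly f0 dvd fract_poly P" using c(1) dvd_smult_cancel by (metis to_fract_eq_0_iff)
    then show ?thesis using cf0 by (rule fract_poly_dvdD)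
  qed
  obtain h where h: "M = f0 * h" using f0dvd[OF M(2)] by blast
  have "lead_coeff f0 * lead_coeff h = 1" using M(1) h by (simp add: lead_coeff_mult)
  then have lf: "lead_coeff f0 = 1 \<or> lead_coeff f0 = -1" using zmult_eq_1_iff by blast
  define f where "f = smult (lead_coeff f0) f0"
  have "lead_coeff f = 1" using lf unfolding f_def by (auto simp: lead_coeff_smult)
  moreover have "ev f w = 0" unfolding f_def using f0w by simp
  moreover have "f dvd P" if "ev P w = 0" for P
  proof -
    have "f dvd f0" unfolding f_def using lf by auto
    then show ?thesis using f0dvd[OF that] dvd_trans by blast
  qed
  ultimately show ?thesis by blast
qed


lemma binom_frob:
  assumes q: "prime (q::nat)"
  shows "(of_nat q :: 'a::comm_ring_1) dvd ((x + y) ^ q - x ^ q - y ^ q)"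
proof -
  have q1: "q \<ge> 1" using prime_ge_1_nat[OF q] .
  have split: "{..q} = insert 0 (insert q {1..<q})" using q1 by auto
  have "(x + y) ^ q = (\<Sum>k\<le>q. of_nat (q choose k) * x ^ k * y ^ (q - k))"
    by (rule binomial_ring)
  also have "\<dots> = y ^ q + (x ^ q + (\<Sum>k\<in>{1..<q}. of_nat (q choose k) * x ^ k * y ^ (q - k)))"
    using q1 by (subst split) (simp add: sum.insert)
  finally have eq: "(x + y) ^ q - x ^ q - y ^ q = (\<Sum>k\<in>{1..<q}. of_nat (q choose k) * x ^ k * y ^ (q - k))"
    by (simp add: algebra_simps)
  have "(of_nat q :: 'a) dvd of_nat (q choose k) * x ^ k * y ^ (q - k)" if "k \<in> {1..<q}" for k
  proof -
    have "q dvd (q choose k)" using that q by (intro dvd_choose_prime) auto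
    then obtain c where "q choose k = q * c" by blast
    then show ?thesis by (simp add: mult.assoc)
  qed
  then show ?thesis unfolding eq by (intro dvd_sum) auto
qed

lemma fermat_int:
  assumes q: "prime (q::nat)"
  shows "int q dvd (a ^ q - a)"
proof (induction a rule: int_induct[of _ 0])
  case base then show ?case using prime_gt_0_nat[OF q] by (simp add: power_0_left)
next
  case (step1 i)
  have "int q dvd ((i + 1) ^ q - i ^ q - 1 ^ q)" using binom_frob[OF q, of i 1] by simp
  then have "int q dvd ((i + 1) ^ q - i ^ q - 1 ^ q) + (i ^ q - i)" using step1 dvd_add by blast
  moreover have "((i + 1) ^ q - i ^ q - 1 ^ q) + (i ^ q - i) = (i + 1) ^ q - (i + 1)" by simp
  ultimately show ?case by metis
next
  case (step2 i)
  have "int q dvd (((i - 1) + 1) ^ q - (i - 1) ^ q - 1 ^ q)" using binom_frob[OF q, of "i - 1" 1] by simp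
  then have "int q dvd (i ^ q - i) - (((i - 1) + 1) ^ q - (i - 1) ^ q - 1 ^ q)" using step2 dvd_diff by blast
  moreover have "(i ^ q - i) - (((i - 1) + 1) ^ q - (i - 1) ^ q - 1 ^ q) = (i - 1) ^ q - (i - 1)" by simp
  ultimately show ?case by metis
qed

lemma ofnat_poly_dvd_const: "int q dvd c \<Longrightarrow> (of_nat q :: int poly) dvd [:c:]"
proof -
  assume "int q dvd c"
  then obtain d where "c = int q * d" by blast
  then have "[:c:] = smult d (of_nat q :: int poly)" by (simp add: of_nat_poly)
  then show ?thesis by (metis dvd_refl dvd_smult)
qed

lemma frob:
  assumes q: "prime (q::nat)"
  shows "(of_nat q :: int poly) dvd (pcompose g (monom 1 q) - g ^ q)"
proof (induction g rule: pCons_induct)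
  case 0 then show ?case using prime_gt_0_nat[OF q] by (simp add: power_0_left)
next
  case (pCons a g)
  define x :: "int poly" where "x = [:0,1:]"
  have X: "monom 1 q = x ^ q" unfolding x_def by (simp add: monom_altdef)
  have g: "pCons a g = [:a:] + x * g" unfolding x_def by simp
  define B where "B = ([:a:] + x * g) ^ q - [:a:] ^ q - (x * g) ^ q"
  have B: "(of_nat q :: int poly) dvd B" unfolding B_def by (rule binom_frob[OF q])
  have A: "(of_nat q :: int poly) dvd ([:a:] - [:a:] ^ q)"
  proof -
    have "int q dvd (a - a ^ q)" using fermat_int[OF q, of a] by (simp add: dvd_diff_commute)
    then have "(of_nat q :: int poly) dvd [:a - a ^ q:]" by (rule ofnat_poly_dvd_const)
    then show ?thesis by (simp add: poly_const_pow)
  qed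
  have pc: "pcompose (pCons a g) (monom 1 q) = [:a:] + x ^ q * pcompose g (monom 1 q)"
    by (simp add: pcompose_pCons X)
  have pw: "(pCons a g) ^ q = [:a:] ^ q + x ^ q * g ^ q + B"
    unfolding B_def g by (simp add: power_mult_distrib)
  have "pcompose (pCons a g) (monom 1 q) - (pCons a g) ^ q
      = ([:a:] - [:a:] ^ q) + x ^ q * (pcompose g (monom 1 q) - g ^ q) - B"
    unfolding pc pw by (simp add: algebra_simps)
  then show ?case using A B pCons.IH by simp
qed


lemma coeff_dvd:
  assumes "(of_nat q :: int poly) dvd X"
  shows "int q dvd coeff X i"
proof -
  obtain Y where "X = of_nat q * Y" using assms by blast
  then have "X = smult (int q) Y" by (simp add: of_nat_poly)
  then show ?thesis by simp
qed

lemma final_contra: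
  assumes f: "lead_coeff f = 1" "degree f \<ge> 1" and q: "q > 0"
    and dv: "(of_nat q :: int poly) dvd ([:c:] - f * B)"
  shows "int q dvd c"
proof -
  define B2 where "B2 = map_poly (\<lambda>x. x mod int q) B"
  define B1 where "B1 = map_poly (\<lambda>x. x div int q) B"
  have "B = smult (int q) B1 + B2"
    unfolding B1_def B2_def by (rule poly_eqI) (simp add: coeff_map_poly)
  then have "[:c:] - f * B = of_nat q * (- (f * B1)) + ([:c:] - f * B2)"
    by (simp add: of_nat_poly algebra_simps)
  then have dv2: "(of_nat q :: int poly) dvd ([:c:] - f * B2)"
    using dv by (metis dvd_add_right_iff dvd_triv_left)
  show ?thesis
  proof (cases "B2 = 0")
    case True
    then show ?thesis using coeff_dvd[OF dv2, of 0] by simp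
  next
    case False
    have f0: "f \<noteq> 0" using f by auto
    define d where "d = degree (f * B2)"
    have d: "d = degree f + degree B2" unfolding d_def using f0 False by (rule degree_mult_eq)
    have "coeff (f * B2) d = lead_coeff B2" unfolding d_def by (simp add: lead_coeff_mult f)
    moreover have "d \<ge> 1" using d f by simp
    ultimately have "coeff ([:c:] - f * B2) d = - lead_coeff B2" by (simp add: coeff_pCons split: nat.splits)
    then have "int q dvd lead_coeff B2" using coeff_dvd[OF dv2, of d] by simp
    moreover have "lead_coeff B2 = coeff B (degree B2) mod int q" unfolding B2_def
      by (simp add: coeff_map_poly)
    moreover have "lead_coeff B2 \<noteq> 0" using False by simp
    ultimately show ?thesis using q by (metis int_ops(1) mod_mod_trivial mod_0_imp_dvd of_nat_0_less_iff dvd_imp_mod_0 mod_mod_cancel)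
  qed
qed

lemma dvd_binom_diff: "(a::'a::comm_ring_1) dvd (u + a * v) ^ k - u ^ k"
proof (induction k)
  case 0 then show ?case by simp
next
  case (Suc k)
  have "(u + a * v) ^ Suc k - u ^ Suc k = (u + a * v) * ((u + a * v) ^ k - u ^ k) + a * v * u ^ k"
    by (simp add: algebra_simps)
  then show ?case using Suc by simp
qed

lemma step_prime:
  assumes n: "n > 0" and w: "w ^ n = 1" and q: "prime q" "\<not> q dvd n" and P: "ev P w = 0"
  shows "ev P (w ^ q) = 0"
proof -
  define M :: "int poly" where "M = monom 1 n - 1"
  have "lead_coeff M = 1" unfolding M_def using n
    using lead_coeff_add_le[of "-1 :: int poly" "monom 1 n"] by (simp add: degree_monom_eq)
  moreover have "ev M w = 0" unfolding M_def using w by simp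
  ultimately obtain f where f: "lead_coeff f = 1" "ev f w = 0" "\<And>P. ev P w = 0 \<Longrightarrow> f dvd P"
    using minpoly by blast
  have degf: "degree f \<ge> 1"
  proof (rule ccontr)
    assume "\<not> 1 \<le> degree f"
    then have "degree f = 0" by simp
    then obtain a where "f = [:a:]" by (elim degree_eq_zeroE)
    then have "f = [:1:]" using f(1) by simp
    then show False using f(2) by simp
  qed
  have fw: "ev f (w ^ q) = 0"
  proof (rule ccontr)
    assume fnz: "ev f (w ^ q) \<noteq> 0"
    obtain g where g: "M = f * g" using f(3)[OF \<open>ev M w = 0\<close>] by blast
    have "ev M (w ^ q) = 0" unfolding M_def using w by (simp flip: power_mult add: mult.commute[of q n] power_mult)
    then have gw: "ev g (w ^ q) = 0" using fnz g by simp
    define P' where "P' = pcompose g (monom 1 q)"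
    have "ev P' w = 0" unfolding P'_def using gw by (simp add: ev_pcompose)
    then obtain h where h: "P' = f * h" using f(3) by blast
    define E where "E = P' - g ^ q"
    have E: "(of_nat q :: int poly) dvd E" unfolding E_def P'_def by (rule frob[OF q(1)])
    define x :: "int poly" where "x = [:0,1:]"
    have d1: "pderiv M = monom (int n) (n - 1)" unfolding M_def by (simp add: pderiv_diff pderiv_monom)
    have d2: "x * monom (int n) (n - 1) = monom (int n) n" unfolding x_def using n
      by (cases n) (simp_all add: monom_Suc)
    have d3: "smult (int n) M = monom (int n) n - [:int n:]" unfolding M_def
      by (simp add: smult_monom smult_diff_right)
    have "x * pderiv M - smult (int n) M = [:int n:]" unfolding d1 d2 d3 by simp
    moreover have "pderiv M = f * pderiv g + g * pderiv f" unfolding g by (rule pderiv_mult)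
    ultimately have eqn: "[:int n:] = x * g * pderiv f + f * (x * pderiv g - smult (int n) g)"
      unfolding g by (simp add: algebra_simps)
    define u where "u = x * g * pderiv f"
    define v where "v = x * pderiv g - smult (int n) g"
    obtain K where K: "(u + f * v) ^ q - u ^ q = f * K" using dvd_binom_diff[of f u v q] by blast
    have "[:int n ^ q:] = [:int n:] ^ q" by (simp add: poly_const_pow)
    also have "\<dots> = (u + f * v) ^ q" using eqn unfolding u_def v_def by simp
    also have "\<dots> = u ^ q + f * K" by (metis K diff_add_cancel add.commute)
    also have "u ^ q = (x * pderiv f) ^ q * g ^ q" unfolding u_def by (simp add: power_mult_distrib algebra_simps)
    also have "g ^ q = f * h - E" unfolding E_def h by simp
    finally have "[:int n ^ q:] - f * (K + (x * pderiv f) ^ q * h) = - ((x * pderiv f) ^ q * E)"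
      by (simp add: algebra_simps)
    then have "(of_nat q :: int poly) dvd ([:int n ^ q:] - f * (K + (x * pderiv f) ^ q * h))"
      using E by simp
    then have "int q dvd int n ^ q" using final_contra[OF f(1) degf] prime_gt_0_nat[OF q(1)] by blast
    then have "int q dvd int n" using q(1) prime_dvd_power prime_nat_iff_prime by (metis prime_dvd_power_int prime_nat_int_transfer)
    then show False using q(2) by simp
  qed
  obtain r where "P = f * r" using f(3)[OF P] by blast
  then show ?thesis using fw by simp
qed

lemma galois:
  assumes n: "n > 0" and w: "w ^ n = 1" and t: "coprime t n" and P: "ev P w = 0"
  shows "ev P (w ^ t) = 0"
  using t
proof (induction t rule: less_induct)
  case (less t)
  show ?case
  proof (cases "t \<le> 1")
    case True
    then consider "t = 0" | "t = 1" by linarith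
    then show ?thesis
    proof cases
      case 1
      then have "n = 1" using less.prems by simp
      then have "w = 1" using w by simp
      then show ?thesis using 1 P by simp
    next
      case 2 then show ?thesis using P by simp
    qed
  next
    case False
    then obtain q where q: "prime q" "q dvd t" using prime_factor_nat[of t] by auto
    then obtain t' where t': "t = q * t'" by blast
    have "t' > 0" using False t' by (cases t') auto
    then have "1 * t' < q * t'" using prime_gt_1_nat[OF q(1)] by (intro mult_less_mono1) auto
    then have "t' < t" using t' by simp
    moreover have "coprime t' n" using less.prems t' by simp
    ultimately have IH: "ev P (w ^ t') = 0" using less.IH by blast
    have "\<not> q dvd n" using less.prems q by (metis coprime_common_divisor_nat prime_gt_1_nat less_irrefl)
    moreover have "(w ^ t') ^ n = 1" using w by (metis mult.commute power_mult power_one)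
    ultimately have "ev P ((w ^ t') ^ q) = 0" using step_prime[OF n _ q(1) _ IH] by blast
    moreover have "w ^ t = (w ^ t') ^ q" using t' by (simp add: power_mult[symmetric] mult.commute)
    ultimately show ?thesis by simp
  qed
qed



definition Ac :: "nat \<Rightarrow> nat \<Rightarrow> int \<Rightarrow> complex" where
  "Ac p u x = cis (2 * pi * real u * of_int x / real p)"

definition dl :: "nat \<Rightarrow> int \<Rightarrow> int \<Rightarrow> int \<Rightarrow> int" where
  "dl p x a b = (if int p dvd x - a then 1 else 0) - (if int p dvd x - b then 1 else 0)"

lemma Ac_mult: "Ac p u a * Ac p u b = Ac p u (a + b)"
  unfolding Ac_def by (simp add: cis_mult add_divide_distrib distrib_left)

lemma Ac_zero[simp]: "Ac p 0 x = 1" unfolding Ac_def by simp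

lemma sum_cis:
  assumes p: "p > 0"
  shows "(\<Sum>u<p. Ac p u x) = (if int p dvd x then of_nat p else 0)"
proof -
  define z where "z = cis (2 * pi * of_int x / real p)"
  have zu: "Ac p u x = z ^ u" for u
    unfolding Ac_def z_def Complex.DeMoivre by (simp add: mult_ac)
  have zp: "z ^ p = 1"
  proof -
    have "z ^ p = cis (2 * pi * of_int x)" unfolding z_def Complex.DeMoivre using p by simp
    also have "\<dots> = 1" by (rule cis_multiple_2pi) simp
    finally show ?thesis .
  qed
  show ?thesis
  proof (cases "int p dvd x")
    case True
    then obtain k where k: "x = int p * k" by blast
    have "2 * pi * of_int x / real p = 2 * pi * of_int k" using p k by simp
    then have "z = cis (2 * pi * of_int k)" unfolding z_def by simp
    then have "z = 1" by (metis cis_multiple_2pi Ints_of_int)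
    then show ?thesis using True by (simp add: zu)
  next
    case False
    have "z \<noteq> 1"
    proof
      assume "z = 1"
      then have "cos (2 * pi * of_int x / real p) = 1" unfolding z_def
        by (metis Re_complex_of_real cis.sel(1) of_real_1)
      then obtain n :: int where n: "2 * pi * of_int x / real p = of_int n * 2 * pi"
        using cos_one_2pi_int by blast
      then have "real_of_int x = of_int n * real p" using p by (simp add: field_simps)
      then have "x = n * int p" by (metis of_int_eq_iff of_int_mult of_int_of_nat_eq)
      then show False using False by simp
    qed
    then show ?thesis using False zp by (simp add: zu sum_gp_strict)
  qed
qed

lemma sum_cis_dl:
  assumes p: "p > 0"
  shows "(\<Sum>u<p. Ac p u (x - a) - Ac p u (x - b)) = of_int (int p * dl p x a b)"
  unfolding sum_subtractf sum_cis[OF p] dl_def by simp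

lemma key_comb:
  fixes p l :: nat and S :: "'b set" and J M J' M' :: "'b \<Rightarrow> int"
  assumes p: "p > 0" and l: "l > 0" and S: "finite S"
    and H: "\<And>u v. u \<in> {1..<p} \<Longrightarrow> v \<in> {1..<l} \<Longrightarrow>
      (\<Sum>s\<in>S. Ac p u (J s) * Ac l v (M s)) = (\<Sum>s\<in>S. Ac p u (J' s) * Ac l v (M' s))"
  shows "(\<Sum>s\<in>S. dl p (J s) j0 j1 * dl l (M s) m0 m1) = (\<Sum>s\<in>S. dl p (J' s) j0 j1 * dl l (M' s) m0 m1)"
proof -
  define W where "W u v = (Ac p u (- j0) - Ac p u (- j1)) * (Ac l v (- m0) - Ac l v (- m1))" for u v
  have expand: "(\<Sum>u<p. \<Sum>v<l. W u v * (\<Sum>s\<in>S. Ac p u (JJ s) * Ac l v (MM s)))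
      = of_int (int p * int l * (\<Sum>s\<in>S. dl p (JJ s) j0 j1 * dl l (MM s) m0 m1))" for JJ MM :: "'b \<Rightarrow> int"
  proof -
    have "(\<Sum>u<p. \<Sum>v<l. W u v * (\<Sum>s\<in>S. Ac p u (JJ s) * Ac l v (MM s)))
        = (\<Sum>u<p. \<Sum>v<l. \<Sum>s\<in>S. (Ac p u (JJ s - j0) - Ac p u (JJ s - j1)) * (Ac l v (MM s - m0) - Ac l v (MM s - m1)))"
    proof (intro sum.cong refl)
      fix u v
      have "W u v * (Ac p u (JJ s) * Ac l v (MM s)) = (Ac p u (JJ s - j0) - Ac p u (JJ s - j1)) * (Ac l v (MM s - m0) - Ac l v (MM s - m1))" for s
      proof -
        have "W u v * (Ac p u (JJ s) * Ac l v (MM s)) = (Ac p u (- j0) * Ac p u (JJ s) - Ac p u (- j1) * Ac p u (JJ s)) * (Ac l v (- m0) * Ac l v (MM s) - Ac l v (- m1) * Ac l v (MM s))"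
          unfolding W_def by (simp add: algebra_simps)
        then show ?thesis by (simp add: Ac_mult)
      qed
      then show "W u v * (\<Sum>s\<in>S. Ac p u (JJ s) * Ac l v (MM s)) = (\<Sum>s\<in>S. (Ac p u (JJ s - j0) - Ac p u (JJ s - j1)) * (Ac l v (MM s - m0) - Ac l v (MM s - m1)))"
        by (simp add: sum_distrib_left)
    qed
    also have "\<dots> = (\<Sum>s\<in>S. \<Sum>u<p. \<Sum>v<l. (Ac p u (JJ s - j0) - Ac p u (JJ s - j1)) * (Ac l v (MM s - m0) - Ac l v (MM s - m1)))"
      by (subst sum.swap) (simp add: sum.swap[of _ "{..<l}"])
    also have "\<dots> = (\<Sum>s\<in>S. (\<Sum>u<p. Ac p u (JJ s - j0) - Ac p u (JJ s - j1)) * (\<Sum>v<l. Ac l v (MM s - m0) - Ac l v (MM s - m1)))"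
      by (simp add: sum_product)
    also have "\<dots> = (\<Sum>s\<in>S. of_int (int p * dl p (JJ s) j0 j1) * of_int (int l * dl l (MM s) m0 m1))"
      by (simp add: sum_cis_dl p l)
    also have "\<dots> = of_int (int p * int l * (\<Sum>s\<in>S. dl p (JJ s) j0 j1 * dl l (MM s) m0 m1))"
      by (simp add: sum_distrib_left mult_ac)
    finally show ?thesis .
  qed
  have zero: "(\<Sum>u<p. \<Sum>v<l. W u v * ((\<Sum>s\<in>S. Ac p u (J s) * Ac l v (M s)) - (\<Sum>s\<in>S. Ac p u (J' s) * Ac l v (M' s)))) = 0"
  proof (intro sum.neutral ballI)
    fix u v assume uv: "u \<in> {..<p}" "v \<in> {..<l}"
    show "W u v * ((\<Sum>s\<in>S. Ac p u (J s) * Ac l v (M s)) - (\<Sum>s\<in>S. Ac p u (J' s) * Ac l v (M' s))) = 0"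
    proof (cases "u = 0 \<or> v = 0")
      case True then show ?thesis unfolding W_def by auto
    next
      case False then show ?thesis using H[of u v] uv by simp
    qed
  qed
  define X where "X = (\<Sum>s\<in>S. dl p (J s) j0 j1 * dl l (M s) m0 m1)"
  define Y where "Y = (\<Sum>s\<in>S. dl p (J' s) j0 j1 * dl l (M' s) m0 m1)"
  have "of_int (int p * int l * X) - of_int (int p * int l * Y) = (0::complex)"
    using zero unfolding right_diff_distrib sum_subtractf expand X_def Y_def .
  then have "complex_of_int (int p * int l * X) = complex_of_int (int p * int l * Y)"
    by (simp only: right_minus_eq)
  then have "int p * int l * X = int p * int l * Y" by (simp only: of_int_eq_iff)
  then show ?thesis using p l unfolding X_def Y_def by simp
qed



lemma dl_scale:
  assumes "prime (int P)" "\<not> int P dvd c"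
  shows "dl P (x * c) (a * c) (b * c) = dl P x a b"
proof -
  have "int P dvd x * c - y * c \<longleftrightarrow> int P dvd x - y" for y
    using assms prime_dvd_mult_iff[OF assms(1), of "x - y" c] by (simp add: left_diff_distrib)
  then show ?thesis unfolding dl_def by simp
qed

lemma dvd_range_eq:
  fixes m x y :: int
  assumes "0 \<le> x" "x < m" "0 \<le> y" "y < m"
  shows "m dvd x - y \<longleftrightarrow> x = y"
proof
  assume "m dvd x - y"
  then have "x mod m = y mod m" by (simp add: mod_eq_dvd_iff)
  then show "x = y" using assms by simp
qed simp

definition ind :: "bool \<Rightarrow> int" where "ind b = (if b then 1 else 0)"

lemma dl_range:
  assumes "0 \<le> x" "x < int P" "0 \<le> a" "a < int P" "0 \<le> b" "b < int P"
  shows "dl P x a b = ind (x = a) - ind (x = b)"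
  unfolding dl_def ind_def using dvd_range_eq[of x "int P" a] dvd_range_eq[of x "int P" b] assms by simp

lemma sq_sub:
  assumes "prime (p::int)"
  shows "sq_set p \<subseteq> {1..<p}"
proof
  fix y assume "y \<in> sq_set p"
  then obtain x where x: "y = x * x mod p" "x \<in> {1..<p}" unfolding sq_set_def by blast
  have p0: "p > 0" using assms prime_gt_0_int by blast
  have "y \<noteq> 0"
  proof
    assume "y = 0"
    then have "p dvd x * x" using x by (simp add: dvd_eq_mod_eq_0)
    then have "p dvd x" using assms prime_dvd_mult_iff by blast
    then show False using x zdvd_not_zless[of x p] by auto
  qed
  moreover have "0 \<le> y" "y < p" using x p0 by auto
  ultimately show "y \<in> {1..<p}" by auto
qed

lemma one_sq:
  assumes "prime (p::int)"
  shows "1 \<in> sq_set p"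
proof -
  have "p > 1" using assms prime_gt_1_int by blast
  then have "1 = 1 * 1 mod p" "(1::int) \<in> {1..<p}" by auto
  then show ?thesis unfolding sq_set_def by blast
qed

lemma nonsq:
  assumes "prime (p::int)" "odd p"
  shows "\<exists>n0\<in>{1..<p}. n0 \<notin> sq_set p"
proof -
  have p2: "p > 2" using prime_gt_1_int[OF assms(1)] assms(2) by (cases "p = 2") auto
  define h where "h = (p - 1) div 2"
  have "sq_set p \<subseteq> (\<lambda>x. x * x mod p) ` {1..h}"
  proof
    fix y assume "y \<in> sq_set p"
    then obtain x where x: "y = x * x mod p" "x \<in> {1..<p}" unfolding sq_set_def by blast
    show "y \<in> (\<lambda>x. x * x mod p) ` {1..h}"
    proof (cases "2 * x \<le> p - 1")
      case True then show ?thesis using x unfolding h_def by auto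
    next
      case False
      then have "2 * x \<ge> p + 1" using assms(2) by presburger
      then have "p - x \<in> {1..h}" using x unfolding h_def by auto
      moreover have "(p - x) * (p - x) mod p = x * x mod p"
      proof -
        have "(p - x) * (p - x) - x * x = p * (p - 2 * x)" by (simp add: algebra_simps)
        then show ?thesis by (simp add: mod_eq_dvd_iff)
      qed
      ultimately show ?thesis using x(1) by (intro image_eqI[where x = "p - x"]) simp_all
    qed
  qed
  then have "card (sq_set p) \<le> card ((\<lambda>x. x * x mod p) ` {1..h})" by (rule card_mono[rotated]) simp
  also have "\<dots> \<le> card {1..h}" by (rule card_image_le) simp
  also have "\<dots> = nat h" by simp
  also have "\<dots> < card {1..<p}" using p2 unfolding h_def by simp
  finally have lt: "card (sq_set p) < card {1..<p}" .
  have fin: "finite (sq_set p)" using sq_sub[OF assms(1)] finite_subset by blast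
  have "\<not> {1..<p} \<subseteq> sq_set p"
  proof
    assume "{1..<p} \<subseteq> sq_set p"
    then have "card {1..<p} \<le> card (sq_set p)" using fin by (rule card_mono[rotated])
    then show False using lt by simp
  qed
  then show ?thesis by blast
qed

lemma cis_pair:
  fixes p l J M :: int
  assumes "p > 0" "l > 0" "J * l + M * p \<ge> 0"
  shows "cis (2 * pi * of_int J / of_int p) * cis (2 * pi * of_int M / of_int l)
       = cis (2 * pi / (of_int p * of_int l)) ^ nat (J * l + M * p)"
proof -
  have "real (nat (J * l + M * p)) = of_int J * of_int l + of_int M * of_int p"
    using assms(3) by simp
  then have eq: "real (nat (J * l + M * p)) * (2 * pi / (of_int p * of_int l)) = 2 * pi * of_int J / of_int p + 2 * pi * of_int M / of_int l"
    using assms by (simp add: field_simps)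
  have "cis (2 * pi * of_int J / of_int p) * cis (2 * pi * of_int M / of_int l)
      = cis (2 * pi * of_int J / of_int p + 2 * pi * of_int M / of_int l)" by (simp add: cis_mult)
  also have "\<dots> = cis (real (nat (J * l + M * p)) * (2 * pi / (of_int p * of_int l)))" by (simp only: eq)
  also have "\<dots> = cis (2 * pi / (of_int p * of_int l)) ^ nat (J * l + M * p)" by (rule Complex.DeMoivre[symmetric])
  finally show ?thesis .
qed

lemma cis_split:
  fixes p l J M :: int and u v :: nat
  assumes "p > 0" "l > 0" "J * l + M * p \<ge> 0"
  shows "(cis (2 * pi / (of_int p * of_int l)) ^ (u * nat l + v * nat p)) ^ nat (J * l + M * p)
       = Ac (nat p) u (J * l) * Ac (nat l) v (M * p)"
proof -
  have e: "real ((u * nat l + v * nat p) * nat (J * l + M * p)) = (real u * of_int l + real v * of_int p) * (of_int J * of_int l + of_int M * of_int p)"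
    using assms by simp
  have eq: "real ((u * nat l + v * nat p) * nat (J * l + M * p)) * (2 * pi / (of_int p * of_int l))
      = (2 * pi * real u * of_int (J * l) / real (nat p) + 2 * pi * real v * of_int (M * p) / real (nat l)) + 2 * pi * of_int (int u * M + int v * J)"
    unfolding e using assms by (simp add: field_simps)
  have "(cis (2 * pi / (of_int p * of_int l)) ^ (u * nat l + v * nat p)) ^ nat (J * l + M * p)
      = cis (real ((u * nat l + v * nat p) * nat (J * l + M * p)) * (2 * pi / (of_int p * of_int l)))"
    unfolding power_mult[symmetric] by (rule Complex.DeMoivre)
  also have "\<dots> = cis (2 * pi * real u * of_int (J * l) / real (nat p) + 2 * pi * real v * of_int (M * p) / real (nat l)) * cis (2 * pi * of_int (int u * M + int v * J))"
    by (simp only: eq cis_mult)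
  also have "cis (2 * pi * of_int (int u * M + int v * J)) = 1" by (rule cis_multiple_2pi) simp
  finally show ?thesis unfolding Ac_def by (simp add: cis_mult)
qed



lemma mod_inv_cancel:
  fixes a b x p :: int
  assumes "(a * b) mod p = 1"
  shows "(a * (b * x mod p)) mod p = x mod p"
proof -
  have "(a * (b * x mod p)) mod p = (a * (b * x)) mod p" by (simp add: mod_mult_right_eq)
  also have "\<dots> = ((a * b) * x) mod p" by (simp add: mult.assoc)
  also have "\<dots> = (((a * b) mod p) * x) mod p" by (simp add: mod_mult_left_eq)
  finally show ?thesis using assms by simp
qed

lemma diff_mod_mult:
  fixes b x y p :: int
  shows "(b * y mod p - b * x mod p) mod p = b * ((y - x) mod p) mod p"
proof -
  have "(b * y mod p - b * x mod p) mod p = (b * y - b * x) mod p" by (simp add: mod_diff_eq)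
  also have "\<dots> = b * (y - x) mod p" by (simp add: right_diff_distrib)
  also have "\<dots> = b * ((y - x) mod p) mod p" by (simp add: mod_mult_right_eq)
  finally show ?thesis .
qed

lemma iso_construct:
  fixes p l a b k c :: int and \<alpha> \<beta> :: "int \<Rightarrow> int"
  assumes p: "p > 0" and l: "l > 0"
    and ab: "(a * b) mod p = 1" and kc: "(k * c) mod l = 1"
    and SS: "\<And>d. 0 \<le> d \<Longrightarrow> d < p \<Longrightarrow> (d \<in> sq_set p \<longleftrightarrow> b * d mod p \<in> sq_set p)"
    and VV: "\<And>d. d \<in> sq_set p \<Longrightarrow> \<alpha> d mod l = (k * \<beta> (b * d mod p)) mod l"
  shows "cover_iso p l \<alpha> (scale_voltage l k \<beta>) (\<lambda>(x, i). (b * x mod p, i))"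
    and "graph_iso p l \<alpha> \<beta> (\<lambda>(x, i). (b * x mod p, c * i mod l))"
proof -
  have ba: "(b * a) mod p = 1" using ab by (simp add: mult.commute)
  have ck: "(c * k) mod l = 1" using kc by (simp add: mult.commute)
  have adj1: "cover_adj p l \<alpha> (x, i) (y, j) \<longleftrightarrow>
      cover_adj p l (scale_voltage l k \<beta>) (b * x mod p, i) (b * y mod p, j)" for x y i j
  proof -
    define d where "d = (y - x) mod p"
    have d: "0 \<le> d" "d < p" unfolding d_def using p by auto
    have e: "(b * y mod p - b * x mod p) mod p = b * d mod p" unfolding d_def by (rule diff_mod_mult)
    show ?thesis unfolding cover_adj_def scale_voltage_def fst_conv snd_conv e d_def[symmetric]
      using SS[OF d] VV[of d] by auto
  qed
  have adj2: "cover_adj p l \<alpha> (x, i) (y, j) \<longleftrightarrow>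
      cover_adj p l \<beta> (b * x mod p, c * i mod l) (b * y mod p, c * j mod l)" for x y i j
  proof -
    define d where "d = (y - x) mod p"
    have d: "0 \<le> d" "d < p" unfolding d_def using p by auto
    have e: "(b * y mod p - b * x mod p) mod p = b * d mod p" unfolding d_def by (rule diff_mod_mult)
    have e2: "(c * j mod l - c * i mod l) mod l = c * ((j - i) mod l) mod l" by (rule diff_mod_mult)
    have eqv: "(X mod l = (k * Y) mod l) \<longleftrightarrow> ((c * (X mod l)) mod l = Y mod l)" for X Y :: int
    proof
      assume "X mod l = (k * Y) mod l"
      then have "(c * (X mod l)) mod l = (c * (k * Y mod l)) mod l" by simp
      also have "\<dots> = Y mod l" using ck by (rule mod_inv_cancel)
      finally show "(c * (X mod l)) mod l = Y mod l" .
    next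
      assume h: "(c * (X mod l)) mod l = Y mod l"
      have "X mod l = (k * (c * (X mod l) mod l)) mod l" using mod_inv_cancel[OF kc, of "X mod l"] by simp
      also have "\<dots> = (k * (Y mod l)) mod l" using h by simp
      also have "\<dots> = (k * Y) mod l" by (simp add: mod_mult_right_eq)
      finally show "X mod l = (k * Y) mod l" .
    qed
    show ?thesis unfolding cover_adj_def fst_conv snd_conv e e2 d_def[symmetric]
      using SS[OF d] VV[of d] eqv[of "j - i" "\<beta> (b * d mod p)"] by auto
  qed
  show "cover_iso p l \<alpha> (scale_voltage l k \<beta>) (\<lambda>(x, i). (b * x mod p, i))"
    unfolding cover_iso_def graph_iso_def
  proof (intro conjI ballI)
    show "bij_betw (\<lambda>(x, i). (b * x mod p, i)) (cover_verts p l) (cover_verts p l)"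
    proof (rule bij_betw_byWitness[where f' = "\<lambda>(y, i). (a * y mod p, i)"])
      show "\<forall>v\<in>cover_verts p l. (\<lambda>(y, i). (a * y mod p, i)) ((\<lambda>(x, i). (b * x mod p, i)) v) = v"
        unfolding cover_verts_def using mod_inv_cancel[OF ab] by auto
      show "\<forall>v\<in>cover_verts p l. (\<lambda>(x, i). (b * x mod p, i)) ((\<lambda>(y, i). (a * y mod p, i)) v) = v"
        unfolding cover_verts_def using mod_inv_cancel[OF ba] by auto
      show "(\<lambda>(x, i). (b * x mod p, i)) ` cover_verts p l \<subseteq> cover_verts p l"
        unfolding cover_verts_def using p by auto
      show "(\<lambda>(y, i). (a * y mod p, i)) ` cover_verts p l \<subseteq> cover_verts p l"
        unfolding cover_verts_def using p by auto
    qed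
  next
    fix v w assume "v \<in> cover_verts p l" "w \<in> cover_verts p l"
    then show "cover_adj p l \<alpha> v w = cover_adj p l (scale_voltage l k \<beta>) ((\<lambda>(x, i). (b * x mod p, i)) v) ((\<lambda>(x, i). (b * x mod p, i)) w)"
      using adj1 by (cases v, cases w) simp
  next
    fix x i j assume "x \<in> {0..<p}" "i \<in> {0..<l}" "j \<in> {0..<l}"
    then show "(\<lambda>(x, i). (b * x mod p, i)) (x, (i + j) mod l) =
       (fst ((\<lambda>(x, i). (b * x mod p, i)) (x, i)), (snd ((\<lambda>(x, i). (b * x mod p, i)) (x, i)) + j) mod l)"
      by simp
  qed
  show "graph_iso p l \<alpha> \<beta> (\<lambda>(x, i). (b * x mod p, c * i mod l))"
    unfolding graph_iso_def
  proof (intro conjI ballI)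
    show "bij_betw (\<lambda>(x, i). (b * x mod p, c * i mod l)) (cover_verts p l) (cover_verts p l)"
    proof (rule bij_betw_byWitness[where f' = "\<lambda>(y, i). (a * y mod p, k * i mod l)"])
      show "\<forall>v\<in>cover_verts p l. (\<lambda>(y, i). (a * y mod p, k * i mod l)) ((\<lambda>(x, i). (b * x mod p, c * i mod l)) v) = v"
        unfolding cover_verts_def using mod_inv_cancel[OF ab] mod_inv_cancel[OF kc] by auto
      show "\<forall>v\<in>cover_verts p l. (\<lambda>(x, i). (b * x mod p, c * i mod l)) ((\<lambda>(y, i). (a * y mod p, k * i mod l)) v) = v"
        unfolding cover_verts_def using mod_inv_cancel[OF ba] mod_inv_cancel[OF ck] by auto
      show "(\<lambda>(x, i). (b * x mod p, c * i mod l)) ` cover_verts p l \<subseteq> cover_verts p l"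
        unfolding cover_verts_def using p l by auto
      show "(\<lambda>(y, i). (a * y mod p, k * i mod l)) ` cover_verts p l \<subseteq> cover_verts p l"
        unfolding cover_verts_def using p l by auto
    qed
  next
    fix v w assume "v \<in> cover_verts p l" "w \<in> cover_verts p l"
    then show "cover_adj p l \<alpha> v w = cover_adj p l \<beta> ((\<lambda>(x, i). (b * x mod p, c * i mod l)) v) ((\<lambda>(x, i). (b * x mod p, c * i mod l)) w)"
      using adj2 by (cases v, cases w) simp
  qed
qed



theorem theorem1p1:
  fixes p l :: int and \<alpha> \<beta> :: "int \<Rightarrow> int"
  assumes "prime p" and "p mod 4 = 1" and "prime l" and "l \<noteq> p"
    and "is_voltage p l \<alpha>" and "is_voltage p l \<beta>"
    and "spectrum_mset p l \<alpha> = spectrum_mset p l \<beta>"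
  shows "(\<exists>n\<in>{1..<l}. \<exists>f. cover_iso p l \<alpha> (scale_voltage l n \<beta>) f)
         \<and> (\<exists>g. graph_iso p l \<alpha> \<beta> g)"
proof -
  have p1: "p > 1" using assms(1) prime_gt_1_int by blast
  have l1: "l > 1" using assms(3) prime_gt_1_int by blast
  have p0: "p > 0" "l > 0" using p1 l1 by auto
  have podd: "odd p" using assms(2) by presburger
  define S where "S = sq_set p"
  have Ssub: "S \<subseteq> {1..<p}" unfolding S_def by (rule sq_sub[OF assms(1)])
  have finS: "finite S" using Ssub finite_subset by blast
  have oneS: "1 \<in> S" unfolding S_def by (rule one_sq[OF assms(1)])
  obtain n0 where n0: "n0 \<in> {1..<p}" "n0 \<notin> S" using nonsq[OF assms(1) podd] unfolding S_def by blast
  define P where "P = nat p"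
  define L where "L = nat l"
  have PL: "int P = p" "int L = l" unfolding P_def L_def using p0 by auto
  have PL0: "P > 0" "L > 0" using PL p0 by auto
  have "(1::int, 1::int) \<in> {0..<p} \<times> {0..<l}" using p1 l1 by auto
  then have "theta p l \<alpha> 1 1 \<in># spectrum_mset p l \<alpha>" unfolding spectrum_mset_def
    by (auto intro!: image_eqI[where x = "(1, 1)"])
  then have "theta p l \<alpha> 1 1 \<in># spectrum_mset p l \<beta>" using assms(7) by simp
  then obtain a k where ak: "a \<in> {0..<p}" "k \<in> {0..<l}" "theta p l \<beta> a k = theta p l \<alpha> 1 1"
    unfolding spectrum_mset_def by auto
  define \<omega> where "\<omega> = cis (2 * pi / (of_int p * of_int l))"
  define Ja where "Ja = (\<lambda>s::int. 1 * s mod p)"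
  define Ma where "Ma = (\<lambda>s. 1 * \<alpha> s mod l)"
  define Jb where "Jb = (\<lambda>s. a * s mod p)"
  define Mb where "Mb = (\<lambda>s. k * \<beta> s mod l)"
  have rng: "0 \<le> Ja s" "Ja s < p" "0 \<le> Ma s" "Ma s < l" "0 \<le> Jb s" "Jb s < p" "0 \<le> Mb s" "Mb s < l" for s
    unfolding Ja_def Ma_def Jb_def Mb_def using p0 by auto
  have nna: "Ja s * l + Ma s * p \<ge> 0" for s using rng[of s] p0 by simp
  have nnb: "Jb s * l + Mb s * p \<ge> 0" for s using rng[of s] p0 by simp
  define Ea where "Ea = (\<lambda>s. nat (Ja s * l + Ma s * p))"
  define Eb where "Eb = (\<lambda>s. nat (Jb s * l + Mb s * p))"
  have tha: "theta p l \<alpha> 1 1 = (\<Sum>s\<in>S. \<omega> ^ Ea s)"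
    unfolding theta_def S_def[symmetric]
  proof (rule sum.cong[OF refl])
    fix s
    show "cis (2 * pi * of_int (1 * s mod p) / of_int p) * cis (2 * pi * of_int (1 * \<alpha> s mod l) / of_int l) = \<omega> ^ Ea s"
      using cis_pair[OF p0 nna[of s]] unfolding Ea_def \<omega>_def Ja_def Ma_def .
  qed
  have thb: "theta p l \<beta> a k = (\<Sum>s\<in>S. \<omega> ^ Eb s)"
    unfolding theta_def S_def[symmetric]
  proof (rule sum.cong[OF refl])
    fix s
    show "cis (2 * pi * of_int (a * s mod p) / of_int p) * cis (2 * pi * of_int (k * \<beta> s mod l) / of_int l) = \<omega> ^ Eb s"
      using cis_pair[OF p0 nnb[of s]] unfolding Eb_def \<omega>_def Jb_def Mb_def .
  qed
  define D :: "int poly" where "D = (\<Sum>s\<in>S. monom 1 (Ea s)) - (\<Sum>s\<in>S. monom 1 (Eb s))"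
  have evD: "ev D z = (\<Sum>s\<in>S. z ^ Ea s) - (\<Sum>s\<in>S. z ^ Eb s)" for z
    unfolding D_def by (simp add: ev_sum)
  have evD0: "ev D \<omega> = 0" using tha thb ak(3) evD by simp
  have wn: "\<omega> ^ (P * L) = 1"
  proof -
    have "\<omega> ^ (P * L) = cis (real (P * L) * (2 * pi / (of_int p * of_int l)))"
      unfolding \<omega>_def by (rule Complex.DeMoivre)
    also have "real (P * L) * (2 * pi / (of_int p * of_int l)) = 2 * pi"
      using PL p0 by (simp flip: PL)
    finally show ?thesis by simp
  qed
  have H: "(\<Sum>s\<in>S. Ac P u (Ja s * l) * Ac L v (Ma s * p)) = (\<Sum>s\<in>S. Ac P u (Jb s * l) * Ac L v (Mb s * p))"
    if u: "u \<in> {1..<P}" and v: "v \<in> {1..<L}" for u v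
  proof -
    define t where "t = u * L + v * P"
    have primeP: "prime P" using assms(1) PL prime_nat_int_transfer[of P] by simp
    have primeL: "prime L" using assms(3) PL prime_nat_int_transfer[of L] by simp
    have PnL: "\<not> P dvd L" using assms(4) PL primeP primeL
      by (metis primes_dvd_imp_eq of_nat_eq_iff)
    have LnP: "\<not> L dvd P" using assms(4) PL primeP primeL
      by (metis primes_dvd_imp_eq of_nat_eq_iff)
    have "\<not> P dvd t"
    proof
      assume "P dvd t"
      then have "P dvd u * L" unfolding t_def by (simp add: dvd_add_left_iff)
      then have "P dvd u \<or> P dvd L" using primeP prime_dvd_mult_iff by blast
      then show False using u PnL by (auto dest: dvd_imp_le)
    qed
    then have c1: "coprime t P" using prime_imp_coprime[OF primeP] coprime_commute by blast
    have "\<not> L dvd t"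
    proof
      assume "L dvd t"
      then have "L dvd v * P" unfolding t_def by (simp add: dvd_add_right_iff)
      then have "L dvd v \<or> L dvd P" using primeL prime_dvd_mult_iff by blast
      then show False using v LnP by (auto dest: dvd_imp_le)
    qed
    then have c2: "coprime t L" using prime_imp_coprime[OF primeL] coprime_commute by blast
    have cop: "coprime t (P * L)" using c1 c2 by simp
    have "ev D (\<omega> ^ t) = 0" using galois[OF _ wn cop evD0] PL0 by simp
    then have "(\<Sum>s\<in>S. (\<omega> ^ t) ^ Ea s) = (\<Sum>s\<in>S. (\<omega> ^ t) ^ Eb s)" using evD by simp
    moreover have "(\<omega> ^ t) ^ Ea s = Ac P u (Ja s * l) * Ac L v (Ma s * p)" for s
      unfolding \<omega>_def t_def Ea_def P_def L_def by (rule cis_split[OF p0 nna])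
    moreover have "(\<omega> ^ t) ^ Eb s = Ac P u (Jb s * l) * Ac L v (Mb s * p)" for s
      unfolding \<omega>_def t_def Eb_def P_def L_def by (rule cis_split[OF p0 nnb])
    ultimately show ?thesis by simp
  qed
  have KEY0: "(\<Sum>s\<in>S. dl P (Ja s * l) (j0 * l) (j1 * l) * dl L (Ma s * p) (m0 * p) (m1 * p))
      = (\<Sum>s\<in>S. dl P (Jb s * l) (j0 * l) (j1 * l) * dl L (Mb s * p) (m0 * p) (m1 * p))" for j0 j1 m0 m1
    by (rule key_comb[OF PL0 finS H])
  have pP: "prime (int P)" "prime (int L)" using PL assms(1,3) by auto
  have ndv: "\<not> int P dvd l" "\<not> int L dvd p" using PL assms(1,3,4)
    by (metis primes_dvd_imp_eq)+
  have KEY: "(\<Sum>s\<in>S. (ind (Ja s = j0) - ind (Ja s = j1)) * (ind (Ma s = m0) - ind (Ma s = m1)))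
      = (\<Sum>s\<in>S. (ind (Jb s = j0) - ind (Jb s = j1)) * (ind (Mb s = m0) - ind (Mb s = m1)))"
    if j: "0 \<le> j0" "j0 < p" "0 \<le> j1" "j1 < p" and m: "0 \<le> m0" "m0 < l" "0 \<le> m1" "m1 < l" for j0 j1 m0 m1
  proof -
    have "dl P (J * l) (j0 * l) (j1 * l) = ind (J = j0) - ind (J = j1)" if "0 \<le> J" "J < p" for J
      using dl_scale[OF pP(1) ndv(1)] dl_range[of J P j0 j1] that j PL by simp
    moreover have "dl L (M * p) (m0 * p) (m1 * p) = ind (M = m0) - ind (M = m1)" if "0 \<le> M" "M < l" for M
      using dl_scale[OF pP(2) ndv(2)] dl_range[of M L m0 m1] that m PL by simp
    ultimately show ?thesis using KEY0[of j0 j1 m0 m1] rng by simp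
  qed
  have JaS: "Ja s = s" if "s \<in> S" for s using that Ssub unfolding Ja_def by auto
  have MaR: "0 \<le> Ma s" "Ma s < l" for s using rng by auto
  have m1ne: "(m + 1) mod l \<noteq> m" if "0 \<le> m" "m < l" for m
  proof (cases "m + 1 < l")
    case True then show ?thesis using that by simp
  next
    case False
    then have "m + 1 = l" using that by simp
    moreover have "(1 + l * (- v1)) mod l = 1 mod l" unfolding mod_eq_dvd_iff by simp
    ultimately show ?thesis using l1 by simp
  qed
  have a0: "a \<noteq> 0"
  proof
    assume a: "a = 0"
    define m0 where "m0 = Ma 1"
    define m1 where "m1 = (Ma 1 + 1) mod l"
    have mm: "m1 \<noteq> m0" unfolding m0_def m1_def using m1ne MaR by blast
    have rm: "0 \<le> m0" "m0 < l" "0 \<le> m1" "m1 < l" unfolding m0_def m1_def using MaR p0 by auto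
    have "(\<Sum>s\<in>S. (ind (Ja s = 1) - ind (Ja s = n0)) * (ind (Ma s = m0) - ind (Ma s = m1)))
        = (\<Sum>s\<in>S. if s = 1 then (ind (Ma 1 = m0) - ind (Ma 1 = m1)) else 0)"
    proof (rule sum.cong[OF refl])
      fix s assume s: "s \<in> S"
      then have "s \<noteq> n0" using n0 by auto
      then show "(ind (Ja s = 1) - ind (Ja s = n0)) * (ind (Ma s = m0) - ind (Ma s = m1))
          = (if s = 1 then (ind (Ma 1 = m0) - ind (Ma 1 = m1)) else 0)"
        using JaS[OF s] by (simp add: ind_def)
    qed
    also have "\<dots> = 1" using oneS finS mm by (simp add: ind_def m0_def)
    finally have L1: "(\<Sum>s\<in>S. (ind (Ja s = 1) - ind (Ja s = n0)) * (ind (Ma s = m0) - ind (Ma s = m1))) = 1" .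
    have "(\<Sum>s\<in>S. (ind (Jb s = 1) - ind (Jb s = n0)) * (ind (Mb s = m0) - ind (Mb s = m1))) = 0"
      using n0 unfolding Jb_def a by (simp add: ind_def)
    moreover have "0 \<le> (1::int)" "1 < p" "0 \<le> n0" "n0 < p" using p1 n0 by auto
    ultimately show False using KEY[of 1 n0 m0 m1] L1 rm by simp
  qed
  have apos: "0 < a" "a < p" using ak(1) a0 by auto
  have Jbnz: "Jb s \<noteq> 0" if "s \<in> S" for s
  proof
    assume "Jb s = 0"
    then have "p dvd a * s" unfolding Jb_def by (simp add: dvd_eq_mod_eq_0)
    then have "p dvd a \<or> p dvd s" using assms(1) prime_dvd_mult_iff by blast
    then show False using apos that Ssub zdvd_not_zless by (auto dest: zdvd_not_zless)
  qed
  have II: "\<exists>s\<in>S. Jb s = j \<and> Mb s = Ma j" if j: "j \<in> S" for j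
  proof (rule ccontr)
    assume nex: "\<not> (\<exists>s\<in>S. Jb s = j \<and> Mb s = Ma j)"
    define m0 where "m0 = Ma j"
    define m1 where "m1 = (Ma j + 1) mod l"
    have mm: "m1 \<noteq> m0" unfolding m0_def m1_def using m1ne MaR by blast
    have rm: "0 \<le> m0" "m0 < l" "0 \<le> m1" "m1 < l" unfolding m0_def m1_def using MaR p0 by auto
    have "(\<Sum>s\<in>S. (ind (Ja s = j) - ind (Ja s = 0)) * (ind (Ma s = m0) - ind (Ma s = m1)))
        = (\<Sum>s\<in>S. if s = j then (ind (Ma j = m0) - ind (Ma j = m1)) else 0)"
    proof (rule sum.cong[OF refl])
      fix s assume s: "s \<in> S"
      then have "s \<noteq> 0" using Ssub by auto
      then show "(ind (Ja s = j) - ind (Ja s = 0)) * (ind (Ma s = m0) - ind (Ma s = m1))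
          = (if s = j then (ind (Ma j = m0) - ind (Ma j = m1)) else 0)"
        using JaS[OF s] by (simp add: ind_def)
    qed
    also have "\<dots> = 1" using j finS mm by (simp add: ind_def m0_def)
    finally have L1: "(\<Sum>s\<in>S. (ind (Ja s = j) - ind (Ja s = 0)) * (ind (Ma s = m0) - ind (Ma s = m1))) = 1" .
    have "(\<Sum>s\<in>S. (ind (Jb s = j) - ind (Jb s = 0)) * (ind (Mb s = m0) - ind (Mb s = m1))) \<le> 0"
    proof (rule sum_nonpos)
      fix s assume s: "s \<in> S"
      show "(ind (Jb s = j) - ind (Jb s = 0)) * (ind (Mb s = m0) - ind (Mb s = m1)) \<le> 0"
        using Jbnz[OF s] nex s unfolding m0_def by (auto simp: ind_def)
    qed
    moreover have "0 \<le> j" "j < p" "0 \<le> (0::int)" "0 < p" using j Ssub p0 by auto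
    ultimately show False using KEY[of j 0 m0 m1] L1 rm by simp
  qed
  have k0: "k \<noteq> 0"
  proof
    assume k: "k = 0"
    have "\<alpha> s mod l = 0" if "s \<in> S" for s
      using II[OF that] unfolding Mb_def Ma_def k by auto
    then show False using assms(5) unfolding is_voltage_def S_def by blast
  qed
  have SJ: "S \<subseteq> Jb ` S" using II by blast
  have "card (Jb ` S) \<le> card S" using finS by (rule card_image_le)
  then have SJeq: "S = Jb ` S" using card_seteq[OF finite_imageI[OF finS] SJ] by simp
  have I: "Jb s \<in> S" if "s \<in> S" for s using SJeq that by blast
  have "coprime a p"
  proof -
    have "\<not> p dvd a" using apos zdvd_not_zless by blast
    then show ?thesis using prime_imp_coprime[OF assms(1)] coprime_commute by blast
  qed
  then obtain u0 v0 where "u0 * a + v0 * p = 1" using bezout_int[of a p] by auto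
  then have ab: "(a * (u0 mod p)) mod p = 1"
  proof -
    assume h: "u0 * a + v0 * p = 1"
    have "(a * (u0 mod p)) mod p = (a * u0) mod p" by (simp add: mod_mult_right_eq)
    also have "a * u0 = 1 + p * (- v0)" using h by (simp add: algebra_simps)
    also have "(1 + p * (- v0)) mod p = 1 mod p" unfolding mod_eq_dvd_iff by simp
    also have "(1::int) mod p = 1" using p1 by simp
    finally show ?thesis .
  qed
  define b where "b = u0 mod p"
  have "coprime k l"
  proof -
    have "\<not> l dvd k" using ak(2) k0 zdvd_not_zless[of k l] by auto
    then show ?thesis using prime_imp_coprime[OF assms(3)] coprime_commute by blast
  qed
  then obtain u1 v1 where "u1 * k + v1 * l = 1" using bezout_int[of k l] by auto
  then have kc: "(k * u1) mod l = 1"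
  proof -
    assume h: "u1 * k + v1 * l = 1"
    have "k * u1 = 1 + l * (- v1)" using h by (simp add: algebra_simps)
    moreover have "(1 + l * (- v1)) mod l = 1 mod l" unfolding mod_eq_dvd_iff by simp
    ultimately show ?thesis using l1 by simp
  qed
  have SS: "d \<in> sq_set p \<longleftrightarrow> b * d mod p \<in> sq_set p" if d: "0 \<le> d" "d < p" for d
  proof
    assume "d \<in> sq_set p"
    then obtain s where s: "s \<in> S" "Jb s = d" using II S_def by blast
    have "b * d mod p = s"
      using mod_inv_cancel[OF ab[folded b_def, unfolded mult.commute[of a b]], of s] s Ssub
      unfolding Jb_def b_def by (auto simp: mult.commute)
    then show "b * d mod p \<in> sq_set p" using s S_def by simp
  next
    assume "b * d mod p \<in> sq_set p"
    then have "Jb (b * d mod p) \<in> S" using I S_def by simp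
    moreover have "Jb (b * d mod p) = d" unfolding Jb_def using mod_inv_cancel[OF ab[folded b_def], of d] d by simp
    ultimately show "d \<in> sq_set p" using S_def by simp
  qed
  have VV: "\<alpha> d mod l = (k * \<beta> (b * d mod p)) mod l" if d: "d \<in> sq_set p" for d
  proof -
    obtain s where s: "s \<in> S" "Jb s = d" "Mb s = Ma d" using II d S_def by blast
    have "b * d mod p = s"
      using mod_inv_cancel[OF ab[folded b_def, unfolded mult.commute[of a b]], of s] s Ssub
      unfolding Jb_def b_def by (auto simp: mult.commute)
    then show ?thesis using s(3) unfolding Mb_def Ma_def by simp
  qed
  have iso: "cover_iso p l \<alpha> (scale_voltage l k \<beta>) (\<lambda>(x, i). (b * x mod p, i))"
    "graph_iso p l \<alpha> \<beta> (\<lambda>(x, i). (b * x mod p, u1 * i mod l))"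
    using iso_construct[of p l a b k u1 \<alpha> \<beta>, OF p0 ab[folded b_def] kc SS VV] by blast+
  have "k \<in> {1..<l}" using ak(2) k0 by auto
  then show ?thesis using iso by blast
qed


end
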